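(* Let $D\subset\mathbb{R}^2$ be a domain, $v\colon D\to\mathbb{R}^2$ a diffeomorphism onto its image, and let $A\colon[0,\infty)\to\mathbb{SL}(2)$ be a geodesic of $\mathbb{SL}(2)$, where $\mathbb{SL}(2)\subset\mathbb{R}^{2\times2}\cong\mathbb{R}^4$ carries the Riemannian metric induced by the Euclidean metric of $\mathbb{R}^4$. Then $\varphi(t,\alpha)=A(t)v(\alpha)$ is a solution of the Lagrangian incompressible Euler problem on $D$.
   Context: $\mathbb{SL}(2)$ is the group of real $2\times2$ matrices of determinant $1$, a $3$-dimensional submanifold of $\mathbb{R}^{2\times 2}\cong\mathbb{R}^4$. For $\varphi(t,\alpha)=\varphi^t(\alpha)$, primes denote $t$-derivatives and $d\varphi^t$ the Jacobian in $\alpha$. "Solution of the Lagrangian incompressible Euler problem on $D$" means: each $\varphi^t$ is a diffeomorphism of $D$ onto its image, $\det(d\varphi^t)=\det(d\varphi^0)\ne0$ for all $t\ge0$, and there is a scalar function $p(t,\alpha)$ with $(d\varphi^t)^T\varphi''+\nabla_\alpha p=0$. *)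

theory Defs
  imports "HOL-Analysis.Analysis"
begin

text \<open>Real 2x2 matrices are modelled as real^2^2; the library inner product on this
type is the Frobenius (Euclidean R^4) inner product.\<close>

definition SL2 :: "(real^2^2) set" where
  "SL2 = {M. det M = 1}"

definition tangent_space :: "'a::real_normed_vector set \<Rightarrow> 'a \<Rightarrow> 'a set" where
  "tangent_space M p = {X. \<exists>\<gamma> e. e > 0 \<and> \<gamma> 0 = p \<and> (\<forall>s. \<bar>s\<bar> < e \<longrightarrow> \<gamma> s \<in> M)
                              \<and> (\<gamma> has_vector_derivative X) (at 0)}"

definition geodesic_SL2 :: "(real \<Rightarrow> real^2^2) \<Rightarrow> bool" where
  "geodesic_SL2 A \<longleftrightarrow> (\<exists>A1 A2. \<forall>t\<ge>0.
      A t \<in> SL2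
    \<and> (A has_vector_derivative A1 t) (at t within {0..})
    \<and> (A1 has_vector_derivative A2 t) (at t within {0..})
    \<and> (\<forall>X\<in>tangent_space SL2 (A t). A2 t \<bullet> X = 0))"

definition diffeo_onto_image :: "(real^2 \<Rightarrow> real^2) \<Rightarrow> (real^2) set \<Rightarrow> bool" where
  "diffeo_onto_image f D \<longleftrightarrow> inj_on f D \<and> open (f ` D)
    \<and> (\<forall>x\<in>D. f differentiable (at x)) \<and> continuous_on D (\<lambda>x. jacobian f (at x))
    \<and> (\<exists>g. (\<forall>x\<in>D. g (f x) = x)
         \<and> (\<forall>y\<in>f ` D. g differentiable (at y)) \<and> continuous_on (f ` D) (\<lambda>y. jacobian g (at y)))"

definition lagrangian_euler_solution ::
    "(real^2) set \<Rightarrow> (real \<Rightarrow> real^2 \<Rightarrow> real^2) \<Rightarrow> bool" where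
  "lagrangian_euler_solution D \<phi> \<longleftrightarrow>
     (\<forall>t\<ge>0. diffeo_onto_image (\<phi> t) D)
   \<and> (\<forall>t\<ge>0. \<forall>\<alpha>\<in>D. det (jacobian (\<phi> t) (at \<alpha>)) = det (jacobian (\<phi> 0) (at \<alpha>)))
   \<and> (\<forall>\<alpha>\<in>D. det (jacobian (\<phi> 0) (at \<alpha>)) \<noteq> 0)
   \<and> (\<exists>\<phi>1 \<phi>2 (p :: real \<Rightarrow> real^2 \<Rightarrow> real). \<forall>t\<ge>0. \<forall>\<alpha>\<in>D.
        ((\<lambda>s. \<phi> s \<alpha>) has_vector_derivative \<phi>1 t \<alpha>) (at t within {0..})
      \<and> ((\<lambda>s. \<phi>1 s \<alpha>) has_vector_derivative \<phi>2 t \<alpha>) (at t within {0..})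
      \<and> (\<exists>g. (p t has_derivative (\<lambda>h. g \<bullet> h)) (at \<alpha>)
             \<and> transpose (jacobian (\<phi> t) (at \<alpha>)) *v \<phi>2 t \<alpha> + g = 0))"

end

theory Submission imports Defs begin

lemma jac_left:
  fixes f :: "real^2 \<Rightarrow> real^2" and M :: "real^2^2"
  assumes "f differentiable (at x)"
  shows "((\<lambda>y. M *v f y) has_derivative (\<lambda>h. (M ** jacobian f (at x)) *v h)) (at x)"
    and "jacobian (\<lambda>y. M *v f y) (at x) = M ** jacobian f (at x)"
proof -
  have d: "(f has_derivative (\<lambda>h. jacobian f (at x) *v h)) (at x)"
    using assms jacobian_works by blast
  show *: "((\<lambda>y. M *v f y) has_derivative (\<lambda>h. (M ** jacobian f (at x)) *v h)) (at x)"
    using bounded_linear.has_derivative[OF matrix_vector_mul_bounded_linear d, of M]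
    by (simp add: matrix_vector_mul_assoc)
  show "jacobian (\<lambda>y. M *v f y) (at x) = M ** jacobian f (at x)"
    unfolding jacobian_def frechet_derivative_at[OF *, symmetric] by (rule matrix_of_matrix_vector_mul)
qed

lemma jac_right:
  fixes g :: "real^2 \<Rightarrow> real^2" and M :: "real^2^2"
  assumes "g differentiable (at (M *v y))"
  shows "(\<lambda>y. g (M *v y)) differentiable (at y)"
    and "jacobian (\<lambda>y. g (M *v y)) (at y) = jacobian g (at (M *v y)) ** M"
proof -
  have d: "(g has_derivative (\<lambda>h. jacobian g (at (M *v y)) *v h)) (at (M *v y))"
    using assms jacobian_works by blast
  have l: "((*v) M has_derivative (*v) M) (at y)"
    by (simp add: bounded_linear_imp_has_derivative)
  have *: "((\<lambda>y. g (M *v y)) has_derivative (\<lambda>h. (jacobian g (at (M *v y)) ** M) *v h)) (at y)"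
    using diff_chain_at[OF l d] by (simp add: o_def matrix_vector_mul_assoc)
  then show "(\<lambda>y. g (M *v y)) differentiable (at y)" by (rule differentiableI)
  show "jacobian (\<lambda>y. g (M *v y)) (at y) = jacobian g (at (M *v y)) ** M"
    unfolding jacobian_def frechet_derivative_at[OF *, symmetric] by (rule matrix_of_matrix_vector_mul)
qed

lemma tangent_nil:
  fixes M B :: "real^2^2"
  assumes "det M = 1" "B$1$1 + B$2$2 = 0" "B$1$1 * B$2$2 - B$1$2 * B$2$1 = 0"
  shows "M ** B \<in> tangent_space SL2 M"
proof -
  have "det (M + s *\<^sub>R (M ** B)) = 1" for s
  proof -
    have "det (M + s *\<^sub>R (M ** B)) = det (M ** (mat 1 + s *\<^sub>R B))"
      by (rule arg_cong[where f=det]) (simp add: vec_eq_iff forall_2 matrix_matrix_mult_def sum_2 mat_def algebra_simps)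
    also have "\<dots> = 1" using assms
    proof -
      have "det (mat 1 + s *\<^sub>R B) = (1 + s * B$1$1) * (1 + s * B$2$2) - (s * B$1$2) * (s * B$2$1)"
        by (simp add: det_2 mat_def)
      also have "\<dots> = 1 + s * (B$1$1 + B$2$2) + s^2 * (B$1$1 * B$2$2 - B$1$2 * B$2$1)"
        by (simp add: algebra_simps power2_eq_square)
      finally show ?thesis using assms by (simp add: det_mul)
    qed
    finally show ?thesis .
  qed
  moreover have "((\<lambda>s. M + s *\<^sub>R (M ** B)) has_vector_derivative M ** B) (at 0)"
    by (auto intro!: derivative_eq_intros)
  ultimately show ?thesis unfolding tangent_space_def SL2_def
    by (intro CollectI exI[of _ "\<lambda>s. M + s *\<^sub>R (M ** B)"] exI[of _ 1]) auto
qed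

lemma bl_left: "bounded_linear (\<lambda>X::real^2^2. M ** X)"
  by (rule linear_conv_bounded_linear[THEN iffD1], rule linearI)
     (simp_all add: vec_eq_iff forall_2 matrix_matrix_mult_def sum_2 algebra_simps)

lemma bl_right: "bounded_linear (\<lambda>X::real^2^2. X ** M)"
  by (rule linear_conv_bounded_linear[THEN iffD1], rule linearI)
     (simp_all add: vec_eq_iff forall_2 matrix_matrix_mult_def sum_2 algebra_simps)

lemma bl_vec: "bounded_linear (\<lambda>X::real^2^2. X *v w)"
  by (rule linear_conv_bounded_linear[THEN iffD1], rule linearI)
     (simp_all add: vec_eq_iff forall_2 matrix_vector_mult_def sum_2 algebra_simps)

lemma inner_expand: "(x::real^2) \<bullet> y = x$1 * y$1 + x$2 * y$2"
  by (simp add: inner_vec_def sum_2)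

lemma inner_expand2: "(X::real^2^2) \<bullet> Y = X$1$1 * Y$1$1 + X$1$2 * Y$1$2 + X$2$1 * Y$2$1 + X$2$2 * Y$2$2"
  by (simp add: inner_vec_def sum_2)

lemma normal_key:
  fixes M C :: "real^2^2"
  assumes "det M = 1" and orth: "\<forall>X\<in>tangent_space SL2 M. C \<bullet> X = 0"
  shows "transpose (M ** J) *v (C *v w) = (transpose M ** C)$1$1 *s (transpose J *v w)"
proof -
  let ?B1 = "vector [vector [0,1], vector [0,0]] :: real^2^2"
  let ?B2 = "vector [vector [0,0], vector [1,0]] :: real^2^2"
  let ?B3 = "vector [vector [1,1], vector [-1,-1]] :: real^2^2"
  have "C \<bullet> (M ** ?B1) = 0" "C \<bullet> (M ** ?B2) = 0" "C \<bullet> (M ** ?B3) = 0"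
    using orth tangent_nil[OF assms(1)] by auto
  then have e: "C$1$1*M$1$2 + C$2$1*M$2$2 = 0" "C$1$2*M$1$1 + C$2$2*M$2$1 = 0"
    "C$1$1*M$1$1 + C$1$1*M$1$2 - C$1$2*M$1$1 - C$1$2*M$1$2 + C$2$1*M$2$1 + C$2$1*M$2$2 - C$2$2*M$2$1 - C$2$2*M$2$2 = 0"
    by (simp_all add: inner_expand2 matrix_matrix_mult_def sum_2 algebra_simps)
  have e3: "C$1$1*M$1$1 + C$2$1*M$2$1 = C$1$2*M$1$2 + C$2$2*M$2$2"
    using e by algebra
  show ?thesis
    using e e3
    by (simp add: vec_eq_iff forall_2 matrix_vector_mult_def matrix_matrix_mult_def transpose_def sum_2 algebra_simps)
      algebra
qed

lemma inner_transpose: "(x::real^2) \<bullet> ((J::real^2^2) *v h) = (transpose J *v x) \<bullet> h"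
  unfolding inner_vec_def matrix_vector_mult_def transpose_def sum_2 by (simp add: sum_2 algebra_simps)

lemma det_jac_nz:
  fixes v g :: "real^2 \<Rightarrow> real^2"
  assumes "open D" "x \<in> D" "\<forall>x\<in>D. g (v x) = x" "v differentiable (at x)"
    "g differentiable (at (v x))"
  shows "det (jacobian v (at x)) \<noteq> 0"
proof -
  have dv: "(v has_derivative (\<lambda>h. jacobian v (at x) *v h)) (at x)"
    using assms jacobian_works by blast
  have dg: "(g has_derivative (\<lambda>h. jacobian g (at (v x)) *v h)) (at (v x))"
    using assms jacobian_works by blast
  have "((g \<circ> v) has_derivative (\<lambda>h. (jacobian g (at (v x)) ** jacobian v (at x)) *v h)) (at x)"
    using diff_chain_at[OF dv dg] by (simp add: o_def matrix_vector_mul_assoc)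
  then have "((\<lambda>y. y) has_derivative (\<lambda>h. (jacobian g (at (v x)) ** jacobian v (at x)) *v h)) (at x)"
    by (rule has_derivative_transform_within_open[OF _ assms(1,2)]) (use assms in simp)
  then have "(\<lambda>h. (jacobian g (at (v x)) ** jacobian v (at x)) *v h) = (\<lambda>h. h)"
    by (rule has_derivative_unique[OF _ has_derivative_ident])
  then have "matrix (\<lambda>h. (jacobian g (at (v x)) ** jacobian v (at x)) *v h) = matrix (\<lambda>h. h)"
    by (rule arg_cong)
  then have "jacobian g (at (v x)) ** jacobian v (at x) = mat 1"
    using matrix_id_mat_1 by (simp add: id_def)
  then have "det (jacobian g (at (v x))) * det (jacobian v (at x)) = 1"
    by (metis det_mul det_I)
  then show ?thesis by auto
qed

theorem theorem4p3:
  fixes D :: "(real^2) set" and v :: "real^2 \<Rightarrow> real^2" and A :: "real \<Rightarrow> real^2^2"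
  assumes "open D" and "connected D" and "D \<noteq> {}"
    and "diffeo_onto_image v D"
    and "geodesic_SL2 A"
  shows "lagrangian_euler_solution D (\<lambda>t \<alpha>. A t *v v \<alpha>)"
proof -
  obtain A1 A2 where geo: "\<And>t. t \<ge> 0 \<Longrightarrow> A t \<in> SL2
    \<and> (A has_vector_derivative A1 t) (at t within {0..})
    \<and> (A1 has_vector_derivative A2 t) (at t within {0..})
    \<and> (\<forall>X\<in>tangent_space SL2 (A t). A2 t \<bullet> X = 0)"
    using assms(5) unfolding geodesic_SL2_def by blast
  have detA: "det (A t) = 1" if "t \<ge> 0" for t using geo[OF that] by (simp add: SL2_def)
  obtain g where vinj: "inj_on v D" and vop: "open (v ` D)"
    and vd: "\<forall>x\<in>D. v differentiable (at x)"
    and vc: "continuous_on D (\<lambda>x. jacobian v (at x))"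
    and gv: "\<forall>x\<in>D. g (v x) = x" and gd: "\<forall>y\<in>v ` D. g differentiable (at y)"
    and gc: "continuous_on (v ` D) (\<lambda>y. jacobian g (at y))"
    using assms(4) unfolding diffeo_onto_image_def by blast
  have jac: "jacobian (\<lambda>\<alpha>. A t *v v \<alpha>) (at x) = A t ** jacobian v (at x)" if "x \<in> D" for t x
    using jac_left(2) vd that by blast
  have diffeo: "diffeo_onto_image (\<lambda>\<alpha>. A t *v v \<alpha>) D" if t: "t \<ge> 0" for t
  proof -
    have "invertible (A t)" by (simp add: invertible_det_nz detA[OF t])
    then obtain A' where AA': "A t ** A' = mat 1" "A' ** A t = mat 1"
      unfolding invertible_def by blast
    have l1: "A' *v (A t *v y) = y" for y using AA' by (simp add: matrix_vector_mul_assoc)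
    have l2: "A t *v (A' *v y) = y" for y using AA' by (simp add: matrix_vector_mul_assoc)
    have img: "(\<lambda>\<alpha>. A t *v v \<alpha>) ` D = (*v) (A t) ` (v ` D)" by auto
    have bij: "bij ((*v) (A t))"
    proof (rule bijI)
      show "inj ((*v) (A t))" by (rule inj_on_inverseI[of _ "(*v) A'"]) (simp add: l1)
      show "surj ((*v) (A t))" by (rule surjI[of _ "(*v) A'"]) (simp add: l2)
    qed
    have f1: "inj_on (\<lambda>\<alpha>. A t *v v \<alpha>) D"
    proof (rule inj_onI)
      fix x y assume "x \<in> D" "y \<in> D" "A t *v v x = A t *v v y"
      then have "A' *v (A t *v v x) = A' *v (A t *v v y)" by simp
      then have "v x = v y" by (simp only: l1)
      then show "x = y" using vinj \<open>x \<in> D\<close> \<open>y \<in> D\<close> by (meson inj_onD)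
    qed
    have f2: "open ((\<lambda>\<alpha>. A t *v v \<alpha>) ` D)"
      unfolding img using open_bijective_linear_image_eq[OF matrix_vector_mul_linear bij] vop
      by simp
    have f3: "\<forall>x\<in>D. (\<lambda>\<alpha>. A t *v v \<alpha>) differentiable (at x)"
    proof
      fix x assume x: "x \<in> D"
      have "v differentiable (at x)" using vd x by blast
      then show "(\<lambda>\<alpha>. A t *v v \<alpha>) differentiable (at x)" by (rule differentiableI[OF jac_left(1)])
    qed
    have f4: "continuous_on D (\<lambda>x. jacobian (\<lambda>\<alpha>. A t *v v \<alpha>) (at x))"
      by (rule continuous_on_eq[OF bounded_linear.continuous_on[OF bl_left vc]]) (simp add: jac)
    have f5: "\<exists>g'. (\<forall>x\<in>D. g' (A t *v v x) = x)
         \<and> (\<forall>y\<in>(\<lambda>\<alpha>. A t *v v \<alpha>) ` D. g' differentiable (at y))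
         \<and> continuous_on ((\<lambda>\<alpha>. A t *v v \<alpha>) ` D) (\<lambda>y. jacobian g' (at y))"
    proof (intro exI[of _ "\<lambda>y. g (A' *v y)"] conjI)
      show "\<forall>x\<in>D. g (A' *v (A t *v v x)) = x" using gv l1 by simp
      show "\<forall>y\<in>(\<lambda>\<alpha>. A t *v v \<alpha>) ` D. (\<lambda>y. g (A' *v y)) differentiable (at y)"
      proof
        fix y assume "y \<in> (\<lambda>\<alpha>. A t *v v \<alpha>) ` D"
        then obtain a where a: "a \<in> D" "y = A t *v v a" by blast
        then have "A' *v y = v a" by (simp add: l1)
        then have "g differentiable (at (A' *v y))" using gd a by auto
        then show "(\<lambda>y. g (A' *v y)) differentiable (at y)" by (rule jac_right(1))
      qed
      have "continuous_on ((\<lambda>\<alpha>. A t *v v \<alpha>) ` D) (\<lambda>y. jacobian g (at (A' *v y)))"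
        by (rule continuous_on_compose2[OF gc linear_continuous_on[OF matrix_vector_mul_bounded_linear]]) (auto simp: l1)
      then have c: "continuous_on ((\<lambda>\<alpha>. A t *v v \<alpha>) ` D) (\<lambda>y. jacobian g (at (A' *v y)) ** A')"
        by (rule bounded_linear.continuous_on[OF bl_right])
      have e: "\<And>y. y \<in> (\<lambda>\<alpha>. A t *v v \<alpha>) ` D \<Longrightarrow> jacobian (\<lambda>y. g (A' *v y)) (at y) = jacobian g (at (A' *v y)) ** A'"
      proof -
        fix y assume "y \<in> (\<lambda>\<alpha>. A t *v v \<alpha>) ` D"
        then obtain a where a: "a \<in> D" "y = A t *v v a" by blast
        then have "A' *v y = v a" by (simp add: l1)
        then have "g differentiable (at (A' *v y))" using gd a by auto
        then show "jacobian (\<lambda>y. g (A' *v y)) (at y) = jacobian g (at (A' *v y)) ** A'" by (rule jac_right(2))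
      qed
      show "continuous_on ((\<lambda>\<alpha>. A t *v v \<alpha>) ` D) (\<lambda>y. jacobian (\<lambda>y. g (A' *v y)) (at y))"
        by (rule continuous_on_eq[OF c e[symmetric]])
    qed
    show ?thesis unfolding diffeo_onto_image_def using f5 by (intro conjI f1 f2 f3 f4)
  qed
  define lam where "lam t = (transpose (A t) ** A2 t)$1$1" for t
  show ?thesis
    unfolding lagrangian_euler_solution_def
  proof (intro conjI allI impI ballI)
    show "diffeo_onto_image (\<lambda>\<alpha>. A t *v v \<alpha>) D" if "t \<ge> 0" for t by (rule diffeo[OF that])
    show "det (jacobian (\<lambda>\<alpha>. A t *v v \<alpha>) (at x)) = det (jacobian (\<lambda>\<alpha>. A 0 *v v \<alpha>) (at x))"
      if "t \<ge> 0" "x \<in> D" for t x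
      using that by (simp add: jac det_mul detA)
    show "det (jacobian (\<lambda>\<alpha>. A 0 *v v \<alpha>) (at x)) \<noteq> 0" if "x \<in> D" for x
      using that det_jac_nz[of D x g v, OF assms(1) that gv] vd gd
      by (simp add: jac det_mul detA)
    show "\<exists>\<phi>1 \<phi>2 (p :: real \<Rightarrow> real^2 \<Rightarrow> real). \<forall>t\<ge>0. \<forall>\<alpha>\<in>D.
        ((\<lambda>s. A s *v v \<alpha>) has_vector_derivative \<phi>1 t \<alpha>) (at t within {0..})
      \<and> ((\<lambda>s. \<phi>1 s \<alpha>) has_vector_derivative \<phi>2 t \<alpha>) (at t within {0..})
      \<and> (\<exists>g. (p t has_derivative (\<lambda>h. g \<bullet> h)) (at \<alpha>)
             \<and> transpose (jacobian (\<lambda>\<alpha>. A t *v v \<alpha>) (at \<alpha>)) *v \<phi>2 t \<alpha> + g = 0)"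
    proof (rule exI[of _ "\<lambda>t \<alpha>. A1 t *v v \<alpha>"], rule exI[of _ "\<lambda>t \<alpha>. A2 t *v v \<alpha>"],
        rule exI[of _ "\<lambda>t \<alpha>. - (lam t / 2) * (v \<alpha> \<bullet> v \<alpha>)"], intro allI impI ballI conjI)
      fix t :: real and x assume t: "t \<ge> 0" and x: "x \<in> D"
      show "((\<lambda>s. A s *v v x) has_vector_derivative A1 t *v v x) (at t within {0..})"
        using bounded_linear.has_vector_derivative[OF bl_vec, of A "A1 t" "at t within {0..}" "v x"] geo[OF t]
        by simp
      show "((\<lambda>s. A1 s *v v x) has_vector_derivative A2 t *v v x) (at t within {0..})"
        using bounded_linear.has_vector_derivative[OF bl_vec, of A1 "A2 t" "at t within {0..}" "v x"] geo[OF t]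
        by simp
      let ?J = "jacobian v (at x)"
      have dv: "(v has_derivative (\<lambda>h. ?J *v h)) (at x)"
        using vd x jacobian_works by blast
      have d1: "((\<lambda>\<alpha>. - (lam t / 2) * (v \<alpha> \<bullet> v \<alpha>)) has_derivative
              (\<lambda>h. - (lam t / 2) * (v x \<bullet> (?J *v h) + (?J *v h) \<bullet> v x))) (at x)"
        by (intro derivative_eq_intros) (auto intro: dv)
      have d2: "(\<lambda>h. - (lam t / 2) * (v x \<bullet> (?J *v h) + (?J *v h) \<bullet> v x))
          = (\<lambda>h. (- lam t *s (transpose ?J *v v x)) \<bullet> h)"
      proof (rule ext)
        fix h
        have "v x \<bullet> (?J *v h) = (transpose ?J *v v x) \<bullet> h" by (rule inner_transpose)
        moreover have "(?J *v h) \<bullet> v x = v x \<bullet> (?J *v h)" by (rule inner_commute)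
        moreover have "(- lam t *s (transpose ?J *v v x)) \<bullet> h = - lam t * ((transpose ?J *v v x) \<bullet> h)"
          by (simp add: scalar_mult_eq_scaleR)
        ultimately show "- (lam t / 2) * (v x \<bullet> (?J *v h) + (?J *v h) \<bullet> v x) = (- lam t *s (transpose ?J *v v x)) \<bullet> h"
          by simp
      qed
      show "\<exists>g. ((\<lambda>\<alpha>. - (lam t / 2) * (v \<alpha> \<bullet> v \<alpha>)) has_derivative (\<lambda>h. g \<bullet> h)) (at x)
             \<and> transpose (jacobian (\<lambda>\<alpha>. A t *v v \<alpha>) (at x)) *v (A2 t *v v x) + g = 0"
      proof -
        have nk: "transpose (A t ** ?J) *v (A2 t *v v x) = lam t *s (transpose ?J *v v x)"
        proof -
          have orth: "\<forall>X\<in>tangent_space SL2 (A t). A2 t \<bullet> X = 0" using geo[OF t] by simp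
          show ?thesis unfolding lam_def by (rule normal_key[OF detA[OF t] orth])
        qed
        have "transpose (jacobian (\<lambda>\<alpha>. A t *v v \<alpha>) (at x)) *v (A2 t *v v x) + (- lam t *s (transpose ?J *v v x)) = 0"
          unfolding jac[OF x] nk by (simp add: vec_eq_iff)
        then show ?thesis using d1[unfolded d2]
          by - (intro exI[of _ "- lam t *s (transpose ?J *v v x)"] conjI; assumption)
      qed
    qed
  qed
qed

end
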